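(* Let $M\ge2$ and let $\mathcal{P}$ be a Class II source set on $\{1,\dots,M\}$ with $P_1\ge P_2\ge\dots\ge P_M$ for every $P\in\mathcal{P}$, and let $D^{(M-1)}=\sup_{P\in\mathcal{P}}\sum_{i=2}^{M}P_i$. Then for $D\in[0,1]$, $\epsilon^*_{\mathrm{IT}}(\mathcal{P},D)=0$ if and only if $D\ge D^{(M-1)}$.
   Context: A source set is a nonempty set $\mathcal{P}$ of probability distributions on $\{1,\dots,M\}$; Class I means its convex hull contains the uniform distribution; Class II means it is not Class I and a single permutation orders all its distributions decreasingly. A mechanism is an $M\times M$ row-stochastic matrix $Q$ with entries $Q(j|i)$; its diagonal distortions are $D_i=1-Q(i|i)$. $Q$ is $(\mathcal{P},D)$-valid if $\sum_iP_iD_i\le D$ for all $P\in\mathcal{P}$; $\mathcal{Q}(\mathcal{P},D)$ is the set of these. $I(P;Q)$ is the mutual information $I(X;\hat X)$ for $X\sim P$, $\hat X\sim Q(\cdot|X)$; $\epsilon^*_{\mathrm{IT}}(\mathcal{P},D)=\min_{Q\in\mathcal{Q}(\mathcal{P},D)}\max_{P\in\mathcal{P}}I(P;Q)$. *)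

theory Defs
  imports Complex_Main "HOL-Combinatorics.Permutations"
begin

text \<open>Distributions on the alphabet {1..M} are functions nat => real, only values
  on {1..M} matter. A mechanism Q :: nat => nat => real with Q i j = Q(j|i).\<close>

definition is_dist :: "nat \<Rightarrow> (nat \<Rightarrow> real) \<Rightarrow> bool" where
  "is_dist M P \<longleftrightarrow> (\<forall>i\<in>{1..M}. 0 \<le> P i) \<and> (\<Sum>i=1..M. P i) = 1"

definition source_set :: "nat \<Rightarrow> (nat \<Rightarrow> real) set \<Rightarrow> bool" where
  "source_set M \<P> \<longleftrightarrow> \<P> \<noteq> {} \<and> (\<forall>P\<in>\<P>. is_dist M P)"

definition class_I :: "nat \<Rightarrow> (nat \<Rightarrow> real) set \<Rightarrow> bool" where
  "class_I M \<P> \<longleftrightarrow> (\<exists>S w. finite S \<and> S \<subseteq> \<P> \<and> (\<forall>P\<in>S. 0 \<le> w P) \<and> (\<Sum>P\<in>S. w P) = 1 \<and>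
      (\<forall>i\<in>{1..M}. (\<Sum>P\<in>S. w P * P i) = 1 / real M))"

definition class_II :: "nat \<Rightarrow> (nat \<Rightarrow> real) set \<Rightarrow> bool" where
  "class_II M \<P> \<longleftrightarrow> \<not> class_I M \<P> \<and>
     (\<exists>\<sigma>. \<sigma> permutes {1..M} \<and>
        (\<forall>P\<in>\<P>. \<forall>i j. 1 \<le> i \<and> i \<le> j \<and> j \<le> M \<longrightarrow> P (\<sigma> j) \<le> P (\<sigma> i)))"

definition mechanism :: "nat \<Rightarrow> (nat \<Rightarrow> nat \<Rightarrow> real) \<Rightarrow> bool" where
  "mechanism M Q \<longleftrightarrow> (\<forall>i\<in>{1..M}. (\<forall>j\<in>{1..M}. 0 \<le> Q i j) \<and> (\<Sum>j=1..M. Q i j) = 1)"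

definition valid_mech :: "nat \<Rightarrow> (nat \<Rightarrow> real) set \<Rightarrow> real \<Rightarrow> (nat \<Rightarrow> nat \<Rightarrow> real) \<Rightarrow> bool" where
  "valid_mech M \<P> D Q \<longleftrightarrow> mechanism M Q \<and>
     (\<forall>P\<in>\<P>. (\<Sum>i=1..M. P i * (1 - Q i i)) \<le> D)"

definition mutual_info :: "nat \<Rightarrow> (nat \<Rightarrow> real) \<Rightarrow> (nat \<Rightarrow> nat \<Rightarrow> real) \<Rightarrow> real" where
  "mutual_info M P Q = (\<Sum>i=1..M. \<Sum>j=1..M.
      (if P i * Q i j = 0 then 0
       else P i * Q i j * ln (Q i j / (\<Sum>k=1..M. P k * Q k j))))"

definition eps_IT :: "nat \<Rightarrow> (nat \<Rightarrow> real) set \<Rightarrow> real \<Rightarrow> real" where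
  "eps_IT M \<P> D = (INF Q\<in>{Q. valid_mech M \<P> D Q}. (SUP P\<in>\<P>. mutual_info M P Q))"

end

theory Submission
  imports Defs
begin

definition hh :: "real \<Rightarrow> real \<Rightarrow> real" where
  "hh q r = (if q = 0 then r else q * ln (q / r) - q + r)"

lemma Q_le1:
  assumes "mechanism M Q" "i \<in> {1..M}" "j \<in> {1..M}"
  shows "Q i j \<le> 1"
proof -
  have "Q i j \<le> (\<Sum>j=1..M. Q i j)"
    by (rule member_le_sum) (use assms in \<open>auto simp: mechanism_def\<close>)
  thus ?thesis using assms by (simp add: mechanism_def)
qed

lemma r_nonneg:
  assumes "is_dist M P" "mechanism M Q" "j \<in> {1..M}"
  shows "0 \<le> (\<Sum>k=1..M. P k * Q k j)"
  using assms by (auto simp: is_dist_def mechanism_def intro!: sum_nonneg)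

lemma r_le1:
  assumes "is_dist M P" "mechanism M Q" "j \<in> {1..M}"
  shows "(\<Sum>k=1..M. P k * Q k j) \<le> 1"
proof -
  have "(\<Sum>k=1..M. P k * Q k j) \<le> (\<Sum>k=1..M. P k * 1)"
    apply (rule sum_mono)
    using assms Q_le1[OF assms(2) _ assms(3)] by (intro mult_left_mono) (auto simp: is_dist_def)
  thus ?thesis using assms by (simp add: is_dist_def)
qed

lemma r_sum:
  assumes "is_dist M P" "mechanism M Q"
  shows "(\<Sum>j=1..M. \<Sum>k=1..M. P k * Q k j) = 1"
proof -
  have "(\<Sum>j=1..M. \<Sum>k=1..M. P k * Q k j) = (\<Sum>k=1..M. P k * (\<Sum>j=1..M. Q k j))"
    by (subst sum.swap) (simp add: sum_distrib_left)
  also have "\<dots> = (\<Sum>k=1..M. P k)" using assms by (simp add: mechanism_def)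
  finally show ?thesis using assms by (simp add: is_dist_def)
qed

lemma r_pos:
  assumes "is_dist M P" "mechanism M Q" "i \<in> {1..M}" "j \<in> {1..M}" "P i * Q i j \<noteq> 0"
  shows "0 < (\<Sum>k=1..M. P k * Q k j)"
proof -
  have "P i * Q i j \<le> (\<Sum>k=1..M. P k * Q k j)"
    by (rule member_le_sum) (use assms in \<open>auto simp: mechanism_def is_dist_def\<close>)
  moreover have "0 \<le> P i * Q i j" using assms by (auto simp: mechanism_def is_dist_def)
  ultimately show ?thesis using assms(5) by linarith
qed

lemma mi_decomp:
  assumes "is_dist M P" "mechanism M Q"
  shows "mutual_info M P Q = (\<Sum>i=1..M. \<Sum>j=1..M. P i * hh (Q i j) (\<Sum>k=1..M. P k * Q k j))"
proof -
  define r where "r j = (\<Sum>k=1..M. P k * Q k j)" for j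
  have t: "(if P i * Q i j = 0 then 0 else P i * Q i j * ln (Q i j / r j))
      = P i * hh (Q i j) (r j) + P i * Q i j - P i * r j" for i j
    by (auto simp: hh_def algebra_simps)
  have "mutual_info M P Q = (\<Sum>i=1..M. \<Sum>j=1..M. P i * hh (Q i j) (r j) + P i * Q i j - P i * r j)"
    unfolding mutual_info_def r_def[symmetric] t ..
  also have "\<dots> = (\<Sum>i=1..M. \<Sum>j=1..M. P i * hh (Q i j) (r j)) + (\<Sum>i=1..M. P i * (\<Sum>j=1..M. Q i j))
      - (\<Sum>i=1..M. P i * (\<Sum>j=1..M. r j))"
    by (simp add: sum.distrib sum_subtractf sum_distrib_left)
  also have "(\<Sum>i=1..M. P i * (\<Sum>j=1..M. Q i j)) = 1"
    using assms by (simp add: mechanism_def is_dist_def)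
  also have "(\<Sum>i=1..M. P i * (\<Sum>j=1..M. r j)) = 1"
    using assms r_sum[OF assms] by (simp add: r_def is_dist_def flip: sum_distrib_right)
  finally show ?thesis by (simp add: r_def)
qed

lemma hh_ge:
  assumes "0 \<le> q" "0 \<le> r" "q \<noteq> 0 \<Longrightarrow> 0 < r"
  shows "hh q r \<ge> (sqrt q - sqrt r)^2"
proof (cases "q = 0")
  case True thus ?thesis using assms by (simp add: hh_def power2_eq_square)
next
  case False
  hence q: "q > 0" and r: "r > 0" using assms by auto
  have "ln (sqrt r / sqrt q) \<le> sqrt r / sqrt q - 1" by (rule ln_le_minus_one) (use q r in auto)
  moreover have "ln (q / r) = - 2 * ln (sqrt r / sqrt q)"
    using q r by (simp add: ln_div ln_sqrt)
  ultimately have "ln (q/r) \<ge> 2 - 2 * sqrt r / sqrt q" by simp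
  hence "q * ln (q/r) \<ge> q * (2 - 2 * sqrt r / sqrt q)" using q by (simp add: mult_left_mono)
  also have "q * (2 - 2 * sqrt r / sqrt q) = 2*q - 2 * sqrt q * sqrt r"
    using q by (simp add: field_simps)
  finally have "q * ln (q/r) \<ge> 2*q - 2 * sqrt q * sqrt r" .
  moreover have "(sqrt q - sqrt r)^2 = q + r - 2 * sqrt q * sqrt r"
    using q r by (simp add: power2_eq_square algebra_simps)
  ultimately show ?thesis using False by (simp add: hh_def)
qed

lemma sq_le_hh:
  assumes "0 \<le> q" "q \<le> 1" "0 \<le> r" "r \<le> 1" "q \<noteq> 0 \<Longrightarrow> 0 < r"
  shows "(q - r)^2 \<le> 4 * hh q r"
proof -
  have e: "q - r = (sqrt q - sqrt r) * (sqrt q + sqrt r)"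
    using assms by (simp add: algebra_simps)
  have "(sqrt q + sqrt r)^2 \<le> 4"
  proof -
    have "sqrt q \<le> 1" "sqrt r \<le> 1" using assms by auto
    hence "sqrt q + sqrt r \<le> 2" by linarith
    hence "(sqrt q + sqrt r)^2 \<le> 2^2" by (rule power_mono) (use assms in simp)
    thus ?thesis by simp
  qed
  hence "(q - r)^2 \<le> (sqrt q - sqrt r)^2 * 4"
    unfolding e power_mult_distrib by (rule mult_left_mono) simp
  also have "\<dots> \<le> hh q r * 4" using hh_ge[of q r] assms by simp
  finally show ?thesis by simp
qed


lemma term_lower:
  assumes "is_dist M P" "mechanism M Q" "i \<in> {1..M}" "j \<in> {1..M}"
  shows "P i * hh (Q i j) (\<Sum>k=1..M. P k * Q k j) \<ge> P i * (Q i j - (\<Sum>k=1..M. P k * Q k j))^2 / 4"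
proof (cases "P i = 0")
  case True thus ?thesis by simp
next
  case False
  have Pi: "P i \<ge> 0" using assms by (auto simp: is_dist_def)
  have "(Q i j - (\<Sum>k=1..M. P k * Q k j))^2 \<le> 4 * hh (Q i j) (\<Sum>k=1..M. P k * Q k j)"
  proof (rule sq_le_hh)
    show "0 \<le> Q i j" using assms by (simp add: mechanism_def)
    show "Q i j \<le> 1" by (rule Q_le1[OF assms(2-4)])
    show "0 \<le> (\<Sum>k=1..M. P k * Q k j)" by (rule r_nonneg[OF assms(1,2,4)])
    show "(\<Sum>k=1..M. P k * Q k j) \<le> 1" by (rule r_le1[OF assms(1,2,4)])
    show "0 < (\<Sum>k=1..M. P k * Q k j)" if "Q i j \<noteq> 0"
      by (rule r_pos[OF assms]) (use that False in simp)
  qed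
  hence "P i * (Q i j - (\<Sum>k=1..M. P k * Q k j))^2 \<le> P i * (4 * hh (Q i j) (\<Sum>k=1..M. P k * Q k j))"
    using Pi by (rule mult_left_mono)
  thus ?thesis by simp
qed

lemma mi_lower:
  assumes "is_dist M P" "mechanism M Q"
  shows "mutual_info M P Q \<ge> (\<Sum>i=1..M. P i * (Q i i - (\<Sum>k=1..M. P k * Q k i))^2 / 4)"
    and "mutual_info M P Q \<ge> 0"
proof -
  have nn: "0 \<le> P i * hh (Q i j) (\<Sum>k=1..M. P k * Q k j)" if "i \<in> {1..M}" "j \<in> {1..M}" for i j
  proof -
    have "0 \<le> P i" using assms that by (simp add: is_dist_def)
    hence "0 \<le> P i * (Q i j - (\<Sum>k=1..M. P k * Q k j))^2 / 4" by simp
    thus ?thesis using term_lower[OF assms that] by linarith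
  qed
  have "(\<Sum>i=1..M. P i * (Q i i - (\<Sum>k=1..M. P k * Q k i))^2 / 4)
     \<le> (\<Sum>i=1..M. P i * hh (Q i i) (\<Sum>k=1..M. P k * Q k i))"
    by (rule sum_mono) (rule term_lower[OF assms]; simp)
  also have "\<dots> \<le> (\<Sum>i=1..M. \<Sum>j=1..M. P i * hh (Q i j) (\<Sum>k=1..M. P k * Q k j))"
    apply (rule sum_mono)
    apply (rule member_le_sum[where f="\<lambda>j. P _ * hh (Q _ j) (\<Sum>k=1..M. P k * Q k j)"])
    using nn by auto
  finally show "mutual_info M P Q \<ge> (\<Sum>i=1..M. P i * (Q i i - (\<Sum>k=1..M. P k * Q k i))^2 / 4)"
    using mi_decomp[OF assms] by simp
  show "mutual_info M P Q \<ge> 0"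
    unfolding mi_decomp[OF assms] using nn by (intro sum_nonneg) auto
qed

lemma mi_upper:
  assumes "is_dist M P" "mechanism M Q"
  shows "mutual_info M P Q \<le> real M"
proof -
  have t: "(if P i * Q i j = 0 then 0 else P i * Q i j * ln (Q i j / (\<Sum>k=1..M. P k * Q k j))) \<le> Q i j"
    if ij: "i \<in> {1..M}" "j \<in> {1..M}" for i j
  proof (cases "P i * Q i j = 0")
    case True thus ?thesis using assms ij by (simp add: mechanism_def)
  next
    case False
    define r where "r = (\<Sum>k=1..M. P k * Q k j)"
    have r: "r > 0" using r_pos[OF assms ij False] by (simp add: r_def)
    have Pq: "P i > 0" "Q i j > 0" using False assms ij by (auto simp: is_dist_def mechanism_def less_le)
    have le: "P i * Q i j \<le> r" unfolding r_def
      by (rule member_le_sum[where f="\<lambda>k. P k * Q k j"]) (use assms ij in \<open>auto simp: mechanism_def is_dist_def\<close>)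
    have "ln (Q i j / r) \<le> Q i j / r - 1" by (rule ln_le_minus_one) (use r Pq in simp)
    hence "ln (Q i j / r) \<le> Q i j / r" by simp
    hence "P i * Q i j * ln (Q i j / r) \<le> P i * Q i j * (Q i j / r)"
      using Pq by (intro mult_left_mono) auto
    also have "\<dots> = (P i * Q i j / r) * Q i j" by simp
    also have "\<dots> \<le> 1 * Q i j" using le r Pq by (intro mult_right_mono) auto
    finally show ?thesis using False by (simp add: r_def)
  qed
  have "mutual_info M P Q \<le> (\<Sum>i=1..M. \<Sum>j=1..M. Q i j)"
    unfolding mutual_info_def by (intro sum_mono) (use t in auto)
  also have "\<dots> = (\<Sum>i=1..M. 1)" using assms by (simp add: mechanism_def)
  finally show ?thesis by simp
qed


lemma split1:
  fixes M :: nat and P :: "nat \<Rightarrow> real"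
  assumes "M \<ge> 1"
  shows "(\<Sum>i=1..M. P i) = P 1 + (\<Sum>i=2..M. P i)"
  using sum.atLeast_Suc_atMost[OF assms, of P] by (simp add: numeral_2_eq_2)

theorem lemma4:
  fixes M :: nat and \<P> :: "(nat \<Rightarrow> real) set" and D :: real
  assumes "M \<ge> 2"
    and "source_set M \<P>"
    and "class_II M \<P>"
    and "\<forall>P\<in>\<P>. \<forall>i j. 1 \<le> i \<and> i \<le> j \<and> j \<le> M \<longrightarrow> P j \<le> P i"
    and "0 \<le> D" and "D \<le> 1"
  shows "eps_IT M \<P> D = 0 \<longleftrightarrow> D \<ge> (SUP P\<in>\<P>. \<Sum>i=2..M. P i)"
proof -
  have ne: "\<P> \<noteq> {}" and dist: "\<And>P. P \<in> \<P> \<Longrightarrow> is_dist M P"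
    using assms(2) by (auto simp: source_set_def)
  have M1: "M \<ge> 1" using assms(1) by simp
  have tail_le: "(\<Sum>i=2..M. P i) \<le> 1" if "P \<in> \<P>" for P
  proof -
    have "(\<Sum>i=2..M. P i) \<le> (\<Sum>i=1..M. P i)"
      by (rule sum_mono2) (use dist[OF that] in \<open>auto simp: is_dist_def\<close>)
    thus ?thesis using dist[OF that] by (simp add: is_dist_def)
  qed
  have bddS: "bdd_above ((\<lambda>P. \<Sum>i=2..M. P i) ` \<P>)"
    using tail_le by (intro bdd_aboveI[where M=1]) auto
  have bddMI: "bdd_above ((\<lambda>P. mutual_info M P Q) ` \<P>)" if "mechanism M Q" for Q
    using mi_upper[OF dist that] by (intro bdd_aboveI[where M="real M"]) auto
  have SUP_ge: "(SUP P\<in>\<P>. mutual_info M P Q) \<ge> mutual_info M P Q" if "mechanism M Q" "P \<in> \<P>" for Q P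
    by (rule cSUP_upper[OF that(2) bddMI[OF that(1)]])
  have SUP_nn: "(SUP P\<in>\<P>. mutual_info M P Q) \<ge> 0" if "mechanism M Q" for Q
  proof -
    obtain P where "P \<in> \<P>" using ne by auto
    thus ?thesis using SUP_ge[OF that] mi_lower(2)[OF dist that] by (meson order_trans)
  qed
  have bddV: "bdd_below ((\<lambda>Q. SUP P\<in>\<P>. mutual_info M P Q) ` {Q. valid_mech M \<P> D Q})"
    using SUP_nn by (intro bdd_belowI[where m=0]) (auto simp: valid_mech_def)
  show ?thesis
  proof
    assume eps: "eps_IT M \<P> D = 0"
    show "D \<ge> (SUP P\<in>\<P>. \<Sum>i=2..M. P i)"
    proof (rule ccontr)
      assume "\<not> ?thesis"
      hence "D < (SUP P\<in>\<P>. \<Sum>i=2..M. P i)" by simp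
      then obtain P0 where P0: "P0 \<in> \<P>" and lt: "D < (\<Sum>i=2..M. P0 i)"
        using less_cSUP_iff[OF ne bddS] by auto
      define e where "e = (\<Sum>i=2..M. P0 i) - D"
      have e: "e > 0" using lt by (simp add: e_def)
      have d0: "is_dist M P0" by (rule dist[OF P0])
      have key: "mutual_info M P0 Q \<ge> e^2 / 4" if v: "valid_mech M \<P> D Q" for Q
      proof -
        have mech: "mechanism M Q" using v by (simp add: valid_mech_def)
        define r where "r i = (\<Sum>k=1..M. P0 k * Q k i)" for i
        define d where "d i = Q i i - r i" for i
        have dist_le: "(\<Sum>i=1..M. P0 i * (1 - Q i i)) \<le> D" using v P0 by (simp add: valid_mech_def)
        have "(\<Sum>i=1..M. P0 i * (1 - Q i i)) = 1 - (\<Sum>i=1..M. P0 i * Q i i)"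
          using d0 by (simp add: algebra_simps sum_subtractf is_dist_def)
        hence A: "(\<Sum>i=1..M. P0 i * Q i i) \<ge> 1 - D" using dist_le by simp
        have "(\<Sum>i=1..M. P0 i * r i) \<le> (\<Sum>i=1..M. P0 1 * r i)"
        proof (rule sum_mono)
          fix i assume i: "i \<in> {1..M}"
          have "P0 i \<le> P0 1" using assms(4) P0 i by auto
          moreover have "0 \<le> r i" unfolding r_def by (rule r_nonneg[OF d0 mech i])
          ultimately show "P0 i * r i \<le> P0 1 * r i" by (rule mult_right_mono)
        qed
        also have "\<dots> = P0 1" using r_sum[OF d0 mech] by (simp add: r_def flip: sum_distrib_left)
        finally have B: "(\<Sum>i=1..M. P0 i * r i) \<le> P0 1" .
        have C: "1 = P0 1 + (\<Sum>i=2..M. P0 i)" using split1[OF M1, of P0] d0 by (simp add: is_dist_def)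
        have "(\<Sum>i=1..M. P0 i * d i) = (\<Sum>i=1..M. P0 i * Q i i) - (\<Sum>i=1..M. P0 i * r i)"
          by (simp add: d_def algebra_simps sum_subtractf)
        hence E: "(\<Sum>i=1..M. P0 i * d i) \<ge> e" using A B C by (simp add: e_def)
        have "(\<Sum>i=1..M. P0 i * d i) \<le> (\<Sum>i=1..M. P0 i * (d i ^ 2 / (2*e) + e / 2))"
        proof (rule sum_mono)
          fix i assume i: "i \<in> {1..M}"
          have "0 \<le> (d i - e)^2" by simp
          hence "2 * e * d i \<le> d i ^ 2 + e ^ 2" by (simp add: power2_eq_square algebra_simps)
          hence "d i \<le> d i ^ 2 / (2*e) + e / 2" using e by (simp add: field_simps power2_eq_square)
          thus "P0 i * d i \<le> P0 i * (d i ^ 2 / (2*e) + e / 2)"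
            using d0 i by (intro mult_left_mono) (auto simp: is_dist_def)
        qed
        also have "\<dots> = (\<Sum>i=1..M. P0 i * d i ^ 2 / (2*e) + P0 i * (e / 2))"
          by (simp add: distrib_left)
        also have "\<dots> = (\<Sum>i=1..M. P0 i * d i ^ 2) / (2*e) + (\<Sum>i=1..M. P0 i) * (e / 2)"
          by (simp add: sum.distrib sum_divide_distrib sum_distrib_right)
        also have "\<dots> = (\<Sum>i=1..M. P0 i * d i ^ 2) / (2*e) + e / 2"
          using d0 by (simp add: is_dist_def)
        finally have "e \<le> (\<Sum>i=1..M. P0 i * d i ^ 2) / (2*e) + e / 2" using E by linarith
        hence F: "e^2 \<le> (\<Sum>i=1..M. P0 i * d i ^ 2)" using e
          by (simp add: field_simps power2_eq_square)
        have "(\<Sum>i=1..M. P0 i * d i ^ 2 / 4) \<le> mutual_info M P0 Q"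
          using mi_lower(1)[OF d0 mech] by (simp add: d_def r_def)
        moreover have "(\<Sum>i=1..M. P0 i * d i ^ 2 / 4) = (\<Sum>i=1..M. P0 i * d i ^ 2) / 4"
          by (simp add: sum_divide_distrib)
        ultimately show ?thesis using F by simp
      qed
      define Qid where "Qid = (\<lambda>i j::nat. if i = j then 1 else (0::real))"
      have "valid_mech M \<P> D Qid"
        using assms(5) by (simp add: valid_mech_def mechanism_def Qid_def)
      hence nev: "{Q. valid_mech M \<P> D Q} \<noteq> {}" by auto
      have "e^2/4 \<le> eps_IT M \<P> D"
        unfolding eps_IT_def
      proof (rule cINF_greatest[OF nev])
        fix Q assume "Q \<in> {Q. valid_mech M \<P> D Q}"
        hence v: "valid_mech M \<P> D Q" by simp
        hence "mechanism M Q" by (simp add: valid_mech_def)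
        thus "e^2/4 \<le> (SUP P\<in>\<P>. mutual_info M P Q)"
          using key[OF v] SUP_ge[OF _ P0] by (meson order_trans)
      qed
      thus False using eps e by simp
    qed
  next
    assume DS: "D \<ge> (SUP P\<in>\<P>. \<Sum>i=2..M. P i)"
    define Q0 where "Q0 = (\<lambda>(i::nat) (j::nat). if j = 1 then 1 else (0::real))"
    have mech0: "mechanism M Q0" using M1 by (simp add: mechanism_def Q0_def)
    have v0: "valid_mech M \<P> D Q0" unfolding valid_mech_def
    proof (intro conjI ballI mech0)
      fix P assume P: "P \<in> \<P>"
      have "(\<Sum>i=1..M. P i * (1 - Q0 i i)) = (\<Sum>i=1..M. (if i = 1 then 0 else P i))"
        by (rule sum.cong) (auto simp: Q0_def)
      also have "\<dots> = (\<Sum>i=2..M. P i)"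
        using split1[OF M1, of "\<lambda>i. if i = 1 then 0 else P i"]
        by (simp add: sum.cong[of "{2..M}" "{2..M}" "\<lambda>i. if i = 1 then 0 else P i" P])
      also have "\<dots> \<le> (SUP P\<in>\<P>. \<Sum>i=2..M. P i)" by (rule cSUP_upper[OF P bddS])
      finally show "(\<Sum>i=1..M. P i * (1 - Q0 i i)) \<le> D" using DS by linarith
    qed
    have mi0: "mutual_info M P Q0 = 0" if P: "P \<in> \<P>" for P
    proof -
      have s1: "(\<Sum>k=1..M. P k * Q0 k 1) = 1" using dist[OF P] by (simp add: Q0_def is_dist_def)
      show ?thesis unfolding mutual_info_def
        by (rule sum.neutral, rule ballI, rule sum.neutral) (use dist[OF P] in \<open>auto simp: Q0_def is_dist_def\<close>)
    qed
    have sup0: "(SUP P\<in>\<P>. mutual_info M P Q0) = 0"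
      using mi0 ne by simp
    have "eps_IT M \<P> D \<le> 0" unfolding eps_IT_def
      using cINF_lower[OF bddV, of Q0] v0 sup0 by simp
    moreover have "eps_IT M \<P> D \<ge> 0" unfolding eps_IT_def
      using v0 by (intro cINF_greatest) (auto simp: valid_mech_def SUP_nn)
    ultimately show "eps_IT M \<P> D = 0" by simp
  qed
qed

end
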